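(* Let $s,a\geq 1$ be integers. Let $G$ be a graph which contains no copy of $K_{s,s}$ as a subgraph and let $X\subseteq V(G)$ satisfy $|X|\geq (2a)^{4a+10}(4s)^{4a+2}$. Then there exist an integer $t\in[a,2a]$ and a nonempty collection $\mathcal{I}$ of independent sets of size $t$ contained in $X$ such that $\mathcal{I}$, viewed as a $t$-uniform hypergraph (with edge set $\mathcal{I}$), is $(\varepsilon,\delta)$-superspread, where $\varepsilon=(2a)^{-2}$ and $\delta=(2a)^{-2(a+1)}s^{-1}$.
   Context: For a hypergraph $\mathcal{H}$ and $S\subseteq V(\mathcal{H})$, $\deg_{\mathcal{H}}(S)=|\{e\in E(\mathcal{H}): S\subseteq e\}|$. An edge $e$ is $\delta$-heavy if there exist $S\subseteq e$ and $v\in e\setminus S$ with $\deg_{\mathcal{H}}(S\cup\{v\})\geq\delta\deg_{\mathcal{H}}(S)$. $\mathcal{H}$ is $(\varepsilon,\delta)$-superspread if at most $\varepsilon\,e(\mathcal{H})$ of its edges are $\delta$-heavy. *)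

theory Defs
  imports Main "HOL-Analysis.Analysis"
begin

definition simple_graph :: "'a set \<Rightarrow> ('a \<Rightarrow> 'a \<Rightarrow> bool) \<Rightarrow> bool" where
  "simple_graph V E \<longleftrightarrow> finite V \<and> (\<forall>x y. E x y \<longrightarrow> x \<in> V \<and> y \<in> V)
     \<and> (\<forall>x y. E x y \<longrightarrow> E y x) \<and> (\<forall>x. \<not> E x x)"

definition contains_Kss :: "'a set \<Rightarrow> ('a \<Rightarrow> 'a \<Rightarrow> bool) \<Rightarrow> nat \<Rightarrow> bool" where
  "contains_Kss V E s \<longleftrightarrow> (\<exists>A B. A \<subseteq> V \<and> B \<subseteq> V \<and> A \<inter> B = {} \<and>
      card A = s \<and> card B = s \<and> finite A \<and> finite B \<and> (\<forall>x\<in>A. \<forall>y\<in>B. E x y))"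

definition independent_set :: "('a \<Rightarrow> 'a \<Rightarrow> bool) \<Rightarrow> 'a set \<Rightarrow> bool" where
  "independent_set E I \<longleftrightarrow> (\<forall>x\<in>I. \<forall>y\<in>I. \<not> E x y)"

definition hdeg :: "'a set set \<Rightarrow> 'a set \<Rightarrow> nat" where
  "hdeg H S = card {e \<in> H. S \<subseteq> e}"

definition heavy_edge :: "'a set set \<Rightarrow> real \<Rightarrow> 'a set \<Rightarrow> bool" where
  "heavy_edge H \<delta> e \<longleftrightarrow> (\<exists>S v. S \<subseteq> e \<and> v \<in> e - S \<and>
      real (hdeg H (S \<union> {v})) \<ge> \<delta> * real (hdeg H S))"

definition superspread :: "'a set set \<Rightarrow> real \<Rightarrow> real \<Rightarrow> bool" where
  "superspread H \<epsilon> \<delta> \<longleftrightarrow> real (card {e \<in> H. heavy_edge H \<delta> e}) \<le> \<epsilon> * real (card H)"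

end

theory Submission
  imports Defs
begin

lemma B_bound:
  fixes H :: "'a set set" and t :: nat and \<delta> :: real
  assumes fin: "finite H" and unif: "\<forall>e\<in>H. finite e \<and> card e = t" and dpos: "\<delta> > 0"
    and Se: "S \<subseteq> e0" "e0 \<in> H"
  shows "real (card {w \<in> \<Union>H. w \<notin> S \<and> \<delta> * real (hdeg H S) \<le> real (hdeg H (S \<union> {w}))}) * \<delta> \<le> real t"
proof -
  define B where "B = {w \<in> \<Union>H. w \<notin> S \<and> \<delta> * real (hdeg H S) \<le> real (hdeg H (S \<union> {w}))}"
  have finU: "finite (\<Union>H)" using fin unif by auto
  have finB: "finite B" unfolding B_def by (rule finite_subset[OF _ finU]) auto
  have dS: "hdeg H S \<ge> 1"
  proof -
    have "e0 \<in> {e \<in> H. S \<subseteq> e}" using Se by auto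
    moreover have "finite {e \<in> H. S \<subseteq> e}" using fin by auto
    ultimately show ?thesis unfolding hdeg_def by (metis One_nat_def Suc_leI card_gt_0_iff empty_iff)
  qed
  have sw: "(\<Sum>w\<in>B. hdeg H (S \<union> {w})) \<le> t * hdeg H S"
  proof -
    have "(\<Sum>w\<in>B. hdeg H (S \<union> {w})) = (\<Sum>w\<in>B. \<Sum>e\<in>H. if S \<union> {w} \<subseteq> e then 1 else 0)"
      unfolding hdeg_def by (simp add: sum.inter_filter[OF fin, symmetric])
    also have "\<dots> = (\<Sum>e\<in>H. \<Sum>w\<in>B. if S \<union> {w} \<subseteq> e then 1 else 0)" by (rule sum.swap)
    also have "\<dots> \<le> (\<Sum>e\<in>H. if S \<subseteq> e then t else 0)"
    proof (rule sum_mono)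
      fix e assume eH: "e \<in> H"
      show "(\<Sum>w\<in>B. if S \<union> {w} \<subseteq> e then 1 else 0) \<le> (if S \<subseteq> e then t else 0)"
      proof (cases "S \<subseteq> e")
        case True
        have "(\<Sum>w\<in>B. if S \<union> {w} \<subseteq> e then 1 else (0::nat)) = card {w\<in>B. S \<union> {w} \<subseteq> e}"
          using sum.inter_filter[OF finB, of "\<lambda>_. 1::nat"] by simp
        also have "\<dots> \<le> card e"
          by (rule card_mono) (use eH unif in auto)
        finally show ?thesis using True eH unif by auto
      next
        case False
        then show ?thesis by auto
      qed
    qed
    also have "\<dots> = t * hdeg H S"
      unfolding hdeg_def using sum.inter_filter[OF fin, of "\<lambda>_. t" "\<lambda>e. S \<subseteq> e"] by (simp add: mult.commute)
    finally show ?thesis .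
  qed
  have "real (card B) * (\<delta> * real (hdeg H S)) = (\<Sum>w\<in>B. \<delta> * real (hdeg H S))" by simp
  also have "\<dots> \<le> (\<Sum>w\<in>B. real (hdeg H (S \<union> {w})))"
    by (rule sum_mono) (simp add: B_def)
  also have "\<dots> \<le> real t * real (hdeg H S)" using sw
    by (metis of_nat_le_iff of_nat_mult of_nat_sum)
  finally have "(real (card B) * \<delta>) * real (hdeg H S) \<le> real t * real (hdeg H S)" by (simp add: algebra_simps)
  then have "real (card B) * \<delta> \<le> real t" using dS by (simp add: mult_le_cancel_right)
  then show ?thesis unfolding B_def .
qed

lemma step:
  fixes H :: "'a set set" and t :: nat and \<epsilon> \<delta> :: real
  assumes fin: "finite H" and unif: "\<forall>e\<in>H. finite e \<and> card e = t" and dpos: "\<delta> > 0"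
    and ns: "\<not> superspread H \<epsilon> \<delta>"
  shows "\<exists>H'. (\<forall>f\<in>H'. \<exists>e\<in>H. \<exists>v\<in>e. f = e - {v}) \<and>
           \<epsilon> * \<delta> * real (card H) \<le> real (card H') * 2^t * real t"
proof -
  define Hv where "Hv = {e \<in> H. heavy_edge H \<delta> e}"
  define B where "B S = {w \<in> \<Union>H. w \<notin> S \<and> \<delta> * real (hdeg H S) \<le> real (hdeg H (S \<union> {w}))}" for S
  have finU: "finite (\<Union>H)" using fin unif by auto
  have finHv: "finite Hv" unfolding Hv_def using fin by auto
  have "\<forall>e\<in>Hv. \<exists>p. fst p \<subseteq> e \<and> snd p \<in> e - fst p \<and>
      \<delta> * real (hdeg H (fst p)) \<le> real (hdeg H (fst p \<union> {snd p}))"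
    unfolding Hv_def heavy_edge_def by auto
  then obtain p where p0: "\<forall>e\<in>Hv. fst (p e) \<subseteq> e \<and> snd (p e) \<in> e - fst (p e) \<and>
      \<delta> * real (hdeg H (fst (p e))) \<le> real (hdeg H (fst (p e) \<union> {snd (p e)}))"
    by (rule bchoice[THEN exE])
  have p: "fst (p e) \<subseteq> e \<and> snd (p e) \<in> e - fst (p e) \<and>
      \<delta> * real (hdeg H (fst (p e))) \<le> real (hdeg H (fst (p e) \<union> {snd (p e)}))" if "e \<in> Hv" for e
    using p0 that by blast
  define H' where "H' = (\<lambda>e. e - {snd (p e)}) ` Hv"
  define F where "F f = {e \<in> Hv. e - {snd (p e)} = f}" for f
  have finH': "finite H'" unfolding H'_def using finHv by auto
  have Fb: "real (card (F f)) \<le> 2^t * real t / \<delta>" if fH: "f \<in> H'" for f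
  proof -
    obtain e1 where e1: "e1 \<in> Hv" "f = e1 - {snd (p e1)}" using fH unfolding H'_def by auto
    have e1H: "e1 \<in> H" using e1 unfolding Hv_def by auto
    have fe1: "finite e1" "card e1 = t" using e1H unif by auto
    have ff: "finite f" "card f \<le> t" using e1(2) fe1 card_Diff1_le[of e1 "snd (p e1)"] by auto
    have sub: "F f \<subseteq> (\<lambda>w. insert w f) ` (\<Union>S\<in>Pow f. B S)"
    proof
      fix e assume eF: "e \<in> F f"
      then have eHv: "e \<in> Hv" and ef: "e - {snd (p e)} = f" unfolding F_def by auto
      have eH: "e \<in> H" using eHv unfolding Hv_def by auto
      note pe = p[OF eHv]
      have "fst (p e) \<in> Pow f" using pe ef by auto
      moreover have "snd (p e) \<in> B (fst (p e))" unfolding B_def using pe eH by auto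
      moreover have "e = insert (snd (p e)) f" using pe ef by auto
      ultimately show "e \<in> (\<lambda>w. insert w f) ` (\<Union>S\<in>Pow f. B S)" by blast
    qed
    have finUB: "finite (\<Union>S\<in>Pow f. B S)"
      by (rule finite_subset[OF _ finU]) (auto simp: B_def)
    have "card (F f) \<le> card ((\<lambda>w. insert w f) ` (\<Union>S\<in>Pow f. B S))"
      by (rule card_mono[OF _ sub]) (use finUB in blast)
    also have "\<dots> \<le> card (\<Union>S\<in>Pow f. B S)" by (rule card_image_le[OF finUB])
    also have "\<dots> \<le> (\<Sum>S\<in>Pow f. card (B S))" by (rule card_UN_le) (use ff in auto)
    finally have "real (card (F f)) \<le> (\<Sum>S\<in>Pow f. real (card (B S)))"
      by (metis of_nat_le_iff of_nat_sum)
    also have "\<dots> \<le> (\<Sum>S\<in>Pow f. real t / \<delta>)"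
    proof (rule sum_mono)
      fix S assume "S \<in> Pow f"
      then have "S \<subseteq> e1" using e1 by auto
      from B_bound[OF fin unif dpos this e1H] have "real (card (B S)) * \<delta> \<le> real t" unfolding B_def .
      then show "real (card (B S)) \<le> real t / \<delta>" using dpos by (simp add: pos_le_divide_eq)
    qed
    also have "\<dots> = 2 ^ card f * (real t / \<delta>)" using ff by (simp add: card_Pow)
    also have "\<dots> \<le> 2 ^ t * (real t / \<delta>)"
      by (rule mult_right_mono) (use ff dpos in auto)
    finally show ?thesis by simp
  qed
  have "Hv = (\<Union>f\<in>H'. F f)" unfolding H'_def F_def by auto
  then have "card Hv \<le> (\<Sum>f\<in>H'. card (F f))" using card_UN_le[OF finH'] by simp
  then have "real (card Hv) \<le> (\<Sum>f\<in>H'. real (card (F f)))" by (metis of_nat_le_iff of_nat_sum)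
  also have "\<dots> \<le> (\<Sum>f\<in>H'. 2^t * real t / \<delta>)" by (rule sum_mono) (use Fb in auto)
  also have "\<dots> = real (card H') * 2^t * real t / \<delta>" by simp
  finally have hv: "real (card Hv) * \<delta> \<le> real (card H') * 2^t * real t" using dpos by (simp add: pos_le_divide_eq)
  have "\<epsilon> * real (card H) < real (card Hv)" using ns unfolding superspread_def Hv_def by auto
  then have "\<epsilon> * \<delta> * real (card H) \<le> real (card Hv) * \<delta>" using dpos
    by (simp add: algebra_simps)
  also note hv
  finally have "\<epsilon> * \<delta> * real (card H) \<le> real (card H') * 2 ^ t * real t" .
  moreover have "\<forall>f\<in>H'. \<exists>e\<in>H. \<exists>v\<in>e. f = e - {v}" 
  proof
    fix f assume "f \<in> H'"
    then obtain e where e: "e \<in> Hv" "f = e - {snd (p e)}" unfolding H'_def by auto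
    have "e \<in> H" using e(1) unfolding Hv_def by auto
    moreover have "snd (p e) \<in> e" using p[OF e(1)] by auto
    ultimately show "\<exists>e\<in>H. \<exists>v\<in>e. f = e - {v}" using e(2) by blast
  qed
  ultimately show ?thesis by blast
qed

definition indep :: "('a \<Rightarrow> 'a \<Rightarrow> bool) \<Rightarrow> 'a set \<Rightarrow> nat \<Rightarrow> 'a set set" where
  "indep E Y k = {T. T \<subseteq> Y \<and> card T = k \<and> independent_set E T}"

lemma bad_few:
  assumes sg: "simple_graph V E" and nk: "\<not> contains_Kss V E s" and s1: "s \<ge> 1"
    and YV: "Y \<subseteq> V" and Ybig: "2 * s \<le> card Y"
  shows "card {x\<in>Y. real (card (Y - {y. E x y})) < real (card Y) / (2 * real s)} < s"
proof (rule ccontr)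
  define Bad where "Bad = {x\<in>Y. real (card (Y - {y. E x y})) < real (card Y) / (2 * real s)}"
  assume "\<not> card {x\<in>Y. real (card (Y - {y. E x y})) < real (card Y) / (2 * real s)} < s"
  then have "s \<le> card Bad" unfolding Bad_def by simp
  then obtain A where A: "A \<subseteq> Bad" "card A = s" "finite A" by (rule obtain_subset_with_card_n)
  have finV: "finite V" using sg unfolding simple_graph_def by auto
  have finY: "finite Y" using finV YV finite_subset by auto
  define C where "C = {y\<in>Y. \<forall>x\<in>A. E x y}"
  have "Y - C \<subseteq> (\<Union>x\<in>A. Y - {y. E x y})" unfolding C_def by auto
  then have "card (Y - C) \<le> card (\<Union>x\<in>A. Y - {y. E x y})"
    by (rule card_mono[rotated]) (use finY A in auto)
  also have "\<dots> \<le> (\<Sum>x\<in>A. card (Y - {y. E x y}))" by (rule card_UN_le) (use A in auto)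
  finally have c1: "real (card (Y - C)) \<le> (\<Sum>x\<in>A. real (card (Y - {y. E x y})))"
    by (metis of_nat_le_iff of_nat_sum)
  have Ane: "A \<noteq> {}" using A s1 by auto
  have "(\<Sum>x\<in>A. real (card (Y - {y. E x y}))) < (\<Sum>x\<in>A. real (card Y) / (2 * real s))"
    by (rule sum_strict_mono) (use A Ane Bad_def in auto)
  also have "\<dots> = real (card Y) / 2" using A s1 by simp
  finally have c2: "real (card (Y - C)) < real (card Y) / 2" using c1 by linarith
  have CY: "C \<subseteq> Y" unfolding C_def by auto
  have "card Y = card C + card (Y - C)" using CY finY
    by (metis card_Diff_subset card_mono diff_add_inverse le_add_diff_inverse finite_subset)
  then have "real (card C) > real (card Y) / 2" using c2 by linarith
  then have "s \<le> card C" using Ybig by linarith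
  then obtain B where B: "B \<subseteq> C" "card B = s" "finite B" by (rule obtain_subset_with_card_n)
  have irr: "\<forall>x. \<not> E x x" using sg unfolding simple_graph_def by auto
  have "A \<inter> B = {}"
  proof (rule ccontr)
    assume "A \<inter> B \<noteq> {}"
    then obtain x where "x \<in> A" "x \<in> B" by auto
    then have "E x x" using B unfolding C_def by auto
    then show False using irr by auto
  qed
  moreover have "A \<subseteq> V" using A YV unfolding Bad_def by auto
  moreover have "B \<subseteq> V" using B CY YV by auto
  moreover have "\<forall>x\<in>A. \<forall>y\<in>B. E x y" using B unfolding C_def by auto
  ultimately have "contains_Kss V E s" unfolding contains_Kss_def using A B by blast
  then show False using nk by simp
qed

lemma count_step_alg:
  fixes r s :: real and k :: nat
  assumes r0: "r \<ge> 0" and s1: "s \<ge> 1"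
  shows "(r / (2 * real (Suc k) * (4 * s) ^ Suc k)) ^ Suc k
      \<le> r / (2 * real (Suc k)) * ((r / (4 * s)) / (2 * real k * (4 * s) ^ k)) ^ k"
proof -
  define a2 where "a2 = r / (2 * real (Suc k) * (4 * s) ^ Suc k)"
  define b2 where "b2 = (r / (4 * s)) / (2 * real k * (4 * s) ^ k)"
  have q: "(4 * s) ^ Suc k \<ge> 1" by (rule one_le_power) (use s1 in simp)
  have a1: "a2 \<le> r / (2 * real (Suc k))" unfolding a2_def
    by (rule divide_left_mono) (use q r0 s1 in \<open>auto simp: mult_le_cancel_left1\<close>)
  have a20: "a2 \<ge> 0" unfolding a2_def using r0 s1 by simp
  have ab: "a2 ^ k \<le> b2 ^ k"
  proof (cases "k = 0")
    case True then show ?thesis by simp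
  next
    case False
    have "b2 = r / (2 * real k * (4 * s) ^ Suc k)" unfolding b2_def by (simp add: field_simps)
    moreover have "r / (2 * real (Suc k) * (4 * s) ^ Suc k) \<le> r / (2 * real k * (4 * s) ^ Suc k)"
      by (rule divide_left_mono) (use r0 s1 False in auto)
    ultimately have "a2 \<le> b2" unfolding a2_def by simp
    then show ?thesis using a20 by (simp add: power_mono)
  qed
  have "a2 ^ Suc k = a2 * a2 ^ k" by simp
  also have "\<dots> \<le> r / (2 * real (Suc k)) * b2 ^ k"
    by (rule mult_mono[OF a1 ab]) (use r0 a20 in auto)
  finally show ?thesis unfolding a2_def b2_def .
qed

lemma count:
  assumes sg: "simple_graph V E" and nk: "\<not> contains_Kss V E s" and s1: "s \<ge> 1"
  shows "\<forall>Y r. Y \<subseteq> V \<longrightarrow> (4 * real s) ^ k \<le> r \<longrightarrow> r \<le> real (card Y) \<longrightarrow>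
           (r / (2 * real k * (4 * real s) ^ k)) ^ k \<le> real (card (indep E Y k))"
proof (induction k)
  have finV: "finite V" using sg unfolding simple_graph_def by auto
  case 0
  show ?case
  proof (intro allI impI)
    fix Y :: "'a set" and r :: real
    assume YV: "Y \<subseteq> V"
    have "indep E Y 0 = {{}}"
    proof
      show "indep E Y 0 \<subseteq> {{}}"
      proof
        fix T assume "T \<in> indep E Y 0"
        then have "T \<subseteq> Y" "card T = 0" unfolding indep_def by auto
        then show "T \<in> {{}}" using finite_subset[OF _ finV] YV by fastforce
      qed
    qed (auto simp: indep_def independent_set_def)
    then show "(r / (2 * real 0 * (4 * real s) ^ 0)) ^ 0 \<le> real (card (indep E Y 0))" by simp
  qed
next
  case (Suc k)
  have finV: "finite V" using sg unfolding simple_graph_def by auto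
  have symE: "\<And>x y. E x y \<Longrightarrow> E y x" and irr: "\<And>x. \<not> E x x"
    using sg unfolding simple_graph_def by auto
  show ?case
  proof (intro allI impI)
    fix Y :: "'a set" and r :: real
    assume YV: "Y \<subseteq> V" and rb: "(4 * real s) ^ Suc k \<le> r" and rY: "r \<le> real (card Y)"
    have finY: "finite Y" using finite_subset[OF YV finV] .
    have Q1: "(4 * real s) ^ k \<ge> 1" by (rule one_le_power) (use s1 in simp)
    have r4s: "4 * real s \<le> r" using rb Q1 s1
      by (metis mult.commute mult_le_cancel_left1 order_trans power_Suc le_less_trans linorder_not_le mult_le_cancel_right1 of_nat_0_le_iff mult_nonneg_nonneg zero_le_numeral)
    have r0: "r \<ge> 0" using r4s by simp
    define m where "m = card Y"
    have m4s: "4 * real s \<le> real m" using r4s rY m_def by simp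
    define Bad where "Bad = {x\<in>Y. real (card (Y - {y. E x y})) < real (card Y) / (2 * real s)}"
    have cB: "card Bad < s" unfolding Bad_def
      by (rule bad_few[OF sg nk s1 YV]) (use m4s m_def in simp)
    define Good where "Good = Y - Bad"
    have BY: "Bad \<subseteq> Y" unfolding Bad_def by auto
    have cG: "card Good = m - card Bad" unfolding Good_def m_def using BY finY by (simp add: card_Diff_subset finite_subset)
    have cGr: "real (card Good) \<ge> r / 2"
    proof -
      have "card Bad \<le> m" using BY finY m_def card_mono by blast
      then have "real (card Good) = real m - real (card Bad)" using cG by simp
      also have "\<dots> \<ge> real m - real s" using cB by simp
      finally show ?thesis using m4s rY m_def by linarith
    qed
    define Yx where "Yx x = Y - {y. E x y} - {x}" for x
    define L where "L = ((r / (4 * real s)) / (2 * real k * (4 * real s) ^ k)) ^ k"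
    have IHx: "L \<le> real (card (indep E (Yx x) k))" if xG: "x \<in> Good" for x
    proof -
      have "real (card (Y - {y. E x y})) \<ge> real m / (2 * real s)"
        using xG unfolding Good_def Bad_def m_def by auto
      moreover have "card (Yx x) \<ge> card (Y - {y. E x y}) - 1" unfolding Yx_def
        using card_Diff1_le[of "Y - {y. E x y}" x] finY
        by (metis card_Diff_singleton_if diff_le_self finite_Diff order_refl)
      ultimately have "real (card (Yx x)) \<ge> real m / (2 * real s) - 1" by linarith
      moreover have "real m / (2 * real s) - 1 \<ge> real m / (4 * real s)"
        using m4s s1 by (simp add: field_simps)
      moreover have "real m / (4 * real s) \<ge> r / (4 * real s)" using rY m_def s1
        by (simp add: divide_right_mono)
      ultimately have c1: "r / (4 * real s) \<le> real (card (Yx x))" by linarith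
      have c2: "(4 * real s) ^ k \<le> r / (4 * real s)" using rb s1 by (simp add: field_simps)
      have "Yx x \<subseteq> V" using YV unfolding Yx_def by auto
      then show ?thesis unfolding L_def using Suc.IH c1 c2 by blast
    qed
    have L0: "L \<ge> 0" unfolding L_def using r0 by simp
    define P where "P = (SIGMA x:Good. indep E (Yx x) k)"
    have finG: "finite Good" unfolding Good_def using finY by auto
    have finI: "finite (indep E Z j)" if "Z \<subseteq> Y" for Z j
      by (rule finite_subset[of _ "Pow Y"]) (use that finY in \<open>auto simp: indep_def\<close>)
    have cP: "card P = (\<Sum>x\<in>Good. card (indep E (Yx x) k))"
      unfolding P_def by (rule card_SigmaI[OF finG]) (use finI Yx_def in auto)
    have "real (card P) \<ge> real (card Good) * L"
    proof -
      have "real (card Good) * L = (\<Sum>x\<in>Good. L)" by simp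
      also have "\<dots> \<le> (\<Sum>x\<in>Good. real (card (indep E (Yx x) k)))" by (rule sum_mono) (use IHx in auto)
      also have "\<dots> = real (card P)" using cP by simp
      finally show ?thesis .
    qed
    then have PL: "real (card P) \<ge> r / 2 * L" using cGr L0
      by (meson mult_right_mono order_trans)
    define phi where "phi q = insert (fst q) (snd q)" for q :: "'a \<times> 'a set"
    have finP: "finite P" unfolding P_def
      by (rule finite_SigmaI[OF finG]) (use finI Yx_def in auto)
    have img: "phi ` P \<subseteq> indep E Y (Suc k)"
    proof
      fix U assume "U \<in> phi ` P"
      then obtain x T where xT: "x \<in> Good" "T \<in> indep E (Yx x) k" "U = insert x T"
        unfolding P_def phi_def by auto
      have TY: "T \<subseteq> Yx x" and cT: "card T = k" and iT: "independent_set E T" using xT unfolding indep_def by auto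
      have xY: "x \<in> Y" using xT unfolding Good_def by auto
      have finT: "finite T" using TY finY unfolding Yx_def using finite_subset by blast
      have xT': "x \<notin> T" using TY unfolding Yx_def by auto
      have "U \<subseteq> Y" using xT TY xY unfolding Yx_def by auto
      moreover have "card U = Suc k" using xT(3) finT xT' cT by simp
      moreover have "independent_set E U"
        unfolding independent_set_def
      proof (intro ballI)
        fix y z assume "y \<in> U" "z \<in> U"
        then show "\<not> E y z" using iT TY xT(3) irr symE unfolding independent_set_def Yx_def by blast
      qed
      ultimately show "U \<in> indep E Y (Suc k)" unfolding indep_def by auto
    qed
    have fib: "card {q\<in>P. phi q = U} \<le> Suc k" if "U \<in> phi ` P" for U
    proof -
      have "U \<in> indep E Y (Suc k)" using img that by auto
      then have cU: "card U = Suc k" and UY: "U \<subseteq> Y" unfolding indep_def by auto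
      have "{q\<in>P. phi q = U} \<subseteq> (\<lambda>x. (x, U - {x})) ` U"
      proof
        fix q assume q: "q \<in> {q\<in>P. phi q = U}"
        obtain x T where qxT: "q = (x, T)" by fastforce
        have "T \<subseteq> Yx x" using q qxT unfolding P_def indep_def by auto
        then have "x \<notin> T" unfolding Yx_def by auto
        moreover have "insert x T = U" using q qxT unfolding phi_def by auto
        ultimately have "x \<in> U" "T = U - {x}" by auto
        then show "q \<in> (\<lambda>x. (x, U - {x})) ` U" using qxT by auto
      qed
      then have "card {q\<in>P. phi q = U} \<le> card ((\<lambda>x. (x, U - {x})) ` U)"
        by (rule card_mono[rotated]) (use UY finY finite_subset in blast)
      also have "\<dots> \<le> card U" by (rule card_image_le) (use UY finY finite_subset in blast)
      finally show ?thesis using cU by simp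
    qed
    have "P = (\<Union>U\<in>phi ` P. {q\<in>P. phi q = U})" by auto
    then have "card P \<le> (\<Sum>U\<in>phi ` P. card {q\<in>P. phi q = U})"
      using card_UN_le[of "phi ` P" "\<lambda>U. {q\<in>P. phi q = U}"] finP by simp
    also have "\<dots> \<le> (\<Sum>U\<in>phi ` P. Suc k)" by (rule sum_mono) (use fib in auto)
    also have "\<dots> = Suc k * card (phi ` P)" by simp
    also have "\<dots> \<le> Suc k * card (indep E Y (Suc k))"
      using card_mono[OF finI[OF order_refl] img] by (rule mult_le_mono2)
    finally have "real (card P) \<le> real (Suc k) * real (card (indep E Y (Suc k)))"
      by (metis of_nat_le_iff of_nat_mult)
    with PL have "r / 2 * L \<le> real (Suc k) * real (card (indep E Y (Suc k)))" by linarith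
    then have main: "r / (2 * real (Suc k)) * L \<le> real (card (indep E Y (Suc k)))"
      by (simp add: field_simps)
    have "(r / (2 * real (Suc k) * (4 * real s) ^ Suc k)) ^ Suc k \<le> r / (2 * real (Suc k)) * L"
      unfolding L_def by (rule count_step_alg) (use r0 s1 in auto)
    with main show "(r / (2 * real (Suc k) * (4 * real s) ^ Suc k)) ^ Suc k \<le> real (card (indep E Y (Suc k)))"
      by linarith
  qed
qed

lemma numeric:
  fixes a s :: nat and n :: real
  assumes a1: "a \<ge> 1" and s1: "s \<ge> 1"
    and nb: "n \<ge> (2 * real a) ^ (4 * a + 10) * (4 * real s) ^ (4 * a + 2)"
  shows "n ^ (a - 1) < (n / (2 * real (2 * a) * (4 * real s) ^ (2 * a))) ^ (2 * a) *
           (1 / (2 * real a) ^ 2 * (1 / ((2 * real a) ^ (2 * a + 2) * real s)) / (2 ^ (2 * a) * (2 * real a))) ^ (a + 1)"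
proof -
  define P where "P = 2 * real a"
  define Q where "Q = 4 * real s"
  have P2: "P \<ge> 2" unfolding P_def using a1 by simp
  have Q4: "Q \<ge> 4" unfolding Q_def using s1 by simp
  have Pp: "P > 0" and Qp: "Q > 0" using P2 Q4 by auto
  have sp: "real s > 0" using s1 by simp
  define D where "D = 2 * P * Q ^ (2 * a)"
  define c where "c = 1 / P ^ 2 * (1 / (P ^ (2 * a + 2) * real s)) / (2 ^ (2 * a) * P)"
  have Dp: "D > 0" unfolding D_def using Pp Qp by simp
  have ceq: "c = 1 / (P ^ (2 * a + 5) * (real s * 2 ^ (2 * a)))"
    unfolding c_def by (simp add: power_add field_simps eval_nat_numeral)
  have k1: "real s * 2 ^ (2 * a) \<le> Q * P ^ (2 * a)"
  proof (rule mult_mono)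
    show "real s \<le> Q" unfolding Q_def by simp
    show "(2::real) ^ (2 * a) \<le> P ^ (2 * a)" by (rule power_mono) (use P2 in auto)
  qed (use Qp in auto)
  have nP: "n \<ge> P ^ (4 * a + 10) * Q ^ (4 * a + 2)" using nb unfolding P_def Q_def .
  have np: "n > 0" using nP Pp Qp by (smt (verit) zero_less_mult_iff zero_less_power)
  have nc: "n * c \<ge> P ^ 5 * Q ^ (4 * a + 1)"
  proof -
    have "P ^ 5 * Q ^ (4 * a + 1) = P ^ (4 * a + 10) * Q ^ (4 * a + 2) / (P ^ (2 * a + 5) * (Q * P ^ (2 * a)))"
    proof -
      have "P ^ (4 * a + 10) = P ^ 5 * (P ^ (2 * a + 5) * P ^ (2 * a))"
        by (simp add: power_add[symmetric] add.commute add.left_commute)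
      moreover have "Q ^ (4 * a + 2) = Q ^ (4 * a + 1) * Q" by simp
      ultimately show ?thesis using Pp Qp by (simp add: field_simps)
    qed
    also have "\<dots> \<le> n / (P ^ (2 * a + 5) * (Q * P ^ (2 * a)))"
      by (rule divide_right_mono) (use nP Pp Qp in auto)
    also have "\<dots> \<le> n / (P ^ (2 * a + 5) * (real s * 2 ^ (2 * a)))"
      by (rule divide_left_mono) (use k1 np Pp Qp sp in auto)
    also have "\<dots> = n * c" unfolding ceq by simp
    finally show ?thesis .
  qed
  have ncp: "(n * c) ^ (a + 1) \<ge> (P ^ 5 * Q ^ (4 * a + 1)) ^ (a + 1)"
    by (rule power_mono[OF nc]) (use Pp Qp in auto)
  have e1: "(P ^ 5 * Q ^ (4 * a + 1)) ^ (a + 1) = P ^ (5 * a + 5) * Q ^ ((4 * a + 1) * (a + 1))"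
  proof -
    have "(P ^ 5 * Q ^ (4 * a + 1)) ^ (a + 1) = P ^ (5 * (a + 1)) * Q ^ ((4 * a + 1) * (a + 1))"
      by (simp only: power_mult_distrib power_mult)
    moreover have "5 * (a + 1) = 5 * a + 5" by simp
    ultimately show ?thesis by metis
  qed
  have e2: "D ^ (2 * a) = 2 ^ (2 * a) * P ^ (2 * a) * Q ^ (4 * a * a)"
  proof -
    have "D ^ (2 * a) = 2 ^ (2 * a) * P ^ (2 * a) * Q ^ ((2 * a) * (2 * a))"
      unfolding D_def by (simp only: power_mult_distrib power_mult)
    moreover have "(2 * a) * (2 * a) = 4 * a * a" by simp
    ultimately show ?thesis by metis
  qed
  have d1: "(2::real) ^ (2 * a) * P ^ (2 * a) \<le> P ^ (4 * a)"
  proof -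
    have "(2::real) ^ (2 * a) \<le> P ^ (2 * a)" by (rule power_mono) (use P2 in auto)
    then have "(2::real) ^ (2 * a) * P ^ (2 * a) \<le> P ^ (2 * a) * P ^ (2 * a)" using Pp by simp
    also have "\<dots> = P ^ (4 * a)" by (simp add: power_add[symmetric])
    finally show ?thesis .
  qed
  have d2: "P ^ (4 * a) \<le> P ^ (5 * a + 5)" by (rule power_increasing) (use P2 in auto)
  have d3: "Q ^ (4 * a * a) < Q ^ ((4 * a + 1) * (a + 1))"
    by (rule power_strict_increasing) (use Q4 in \<open>auto simp: algebra_simps\<close>)
  have "D ^ (2 * a) < (n * c) ^ (a + 1)"
  proof -
    have "D ^ (2 * a) \<le> P ^ (5 * a + 5) * Q ^ (4 * a * a)"
      unfolding e2 using d1 d2 Qp by (meson mult_right_mono order_trans zero_le_power less_imp_le)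
    also have "\<dots> < P ^ (5 * a + 5) * Q ^ ((4 * a + 1) * (a + 1))" using d3 Pp by simp
    finally show ?thesis using ncp e1 by linarith
  qed
  then have main: "n ^ (a - 1) * D ^ (2 * a) < n ^ (a - 1) * (n * c) ^ (a + 1)" using np by simp
  have "n ^ (a - 1) * (n * c) ^ (a + 1) = n ^ (2 * a) * c ^ (a + 1)"
  proof -
    have "a - 1 + (a + 1) = 2 * a" using a1 by simp
    then have "n ^ (a - 1) * n ^ (a + 1) = n ^ (2 * a)" by (metis power_add)
    then show ?thesis by (simp add: power_mult_distrib)
  qed
  with main have m2: "n ^ (a - 1) * D ^ (2 * a) < n ^ (2 * a) * c ^ (a + 1)" by (simp only:)
  have "n ^ (a - 1) < n ^ (2 * a) * c ^ (a + 1) / D ^ (2 * a)"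
    using m2 Dp by (simp add: pos_less_divide_eq)
  also have "\<dots> = (n / D) ^ (2 * a) * c ^ (a + 1)" by (simp add: power_divide)
  finally show ?thesis unfolding D_def c_def P_def Q_def by simp
qed

theorem corollary2p8:
  fixes V :: "'a set" and E :: "'a \<Rightarrow> 'a \<Rightarrow> bool" and X :: "'a set" and s a :: nat
  assumes "s \<ge> 1" and "a \<ge> 1"
    and "simple_graph V E"
    and "\<not> contains_Kss V E s"
    and "X \<subseteq> V"
    and "real (card X) \<ge> (2 * real a) ^ (4 * a + 10) * (4 * real s) ^ (4 * a + 2)"
  shows "\<exists>t::nat. a \<le> t \<and> t \<le> 2 * a \<and>
           (\<exists>\<I> :: 'a set set. \<I> \<noteq> {} \<and>
              (\<forall>I\<in>\<I>. I \<subseteq> X \<and> card I = t \<and> independent_set E I) \<and>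
              superspread \<I> ((2 * real a) powi (-2))
                 ((2 * real a) powi (- (2 * (int a + 1))) / real s))"
proof (rule ccontr)
  note s1 = assms(1) and a1 = assms(2) and sg = assms(3) and nk = assms(4) and XV = assms(5) and nb = assms(6)
  define eps where "eps = (2 * real a) powi (-2)"
  define del where "del = (2 * real a) powi (- (2 * (int a + 1))) / real s"
  assume neg: "\<not> (\<exists>t::nat. a \<le> t \<and> t \<le> 2 * a \<and>
           (\<exists>\<I> :: 'a set set. \<I> \<noteq> {} \<and>
              (\<forall>I\<in>\<I>. I \<subseteq> X \<and> card I = t \<and> independent_set E I) \<and>
              superspread \<I> ((2 * real a) powi (-2))
                 ((2 * real a) powi (- (2 * (int a + 1))) / real s)))"
  have nosup: "\<not> superspread H eps del"
    if "a \<le> t" "t \<le> 2 * a" "H \<noteq> {}" "\<forall>I\<in>H. I \<subseteq> X \<and> card I = t \<and> independent_set E I" for t H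
  proof
    assume "superspread H eps del"
    then have "\<exists>t::nat. a \<le> t \<and> t \<le> 2 * a \<and>
           (\<exists>\<I> :: 'a set set. \<I> \<noteq> {} \<and>
              (\<forall>I\<in>\<I>. I \<subseteq> X \<and> card I = t \<and> independent_set E I) \<and>
              superspread \<I> eps del)"
      using that by (intro exI[of _ t] conjI exI[of _ H]) auto
    then show False using neg unfolding eps_def del_def by simp
  qed
  have eps_eq: "eps = 1 / (2 * real a) ^ 2"
    unfolding eps_def power_int_minus power_int_numeral by (simp only: divide_inverse mult_1)
  have e: "- (2 * (int a + 1)) = - int (2 * a + 2)" by simp
  have del_eq: "del = 1 / ((2 * real a) ^ (2 * a + 2) * real s)"
    unfolding del_def e power_int_minus power_int_of_nat
    by (simp only: divide_inverse mult_1 inverse_mult_distrib mult.commute)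
  have dpos: "del > 0" unfolding del_eq using a1 s1 by simp
  have epos: "eps > 0" unfolding eps_eq using a1 by simp
  have finV: "finite V" using sg unfolding simple_graph_def by auto
  have finX: "finite X" using finite_subset[OF XV finV] .
  define n where "n = real (card X)"
  define N0 where "N0 = (n / (2 * real (2 * a) * (4 * real s) ^ (2 * a))) ^ (2 * a)"
  define c where "c = eps * del / (2 ^ (2 * a) * (2 * real a))"
  have cpos: "c > 0" unfolding c_def using epos dpos a1 by simp
  have Q1: "(4 * real s) ^ (2 * a) \<le> (4 * real s) ^ (4 * a + 2)"
    by (rule power_increasing) (use s1 in auto)
  have P1: "1 \<le> (2 * real a) ^ (4 * a + 10)" by (rule one_le_power) (use a1 in simp)
  have n4s: "(4 * real s) ^ (2 * a) \<le> n"
  proof -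
    have "(4 * real s) ^ (2 * a) \<le> 1 * (4 * real s) ^ (4 * a + 2)" using Q1 by simp
    also have "\<dots> \<le> (2 * real a) ^ (4 * a + 10) * (4 * real s) ^ (4 * a + 2)"
      by (rule mult_right_mono[OF P1]) simp
    finally show ?thesis using nb unfolding n_def by linarith
  qed
  have npos: "n > 0"
  proof -
    have "(0::real) < (4 * real s) ^ (2 * a)" using s1 by simp
    then show ?thesis using n4s by linarith
  qed
  have N0pos: "N0 > 0" unfolding N0_def using npos s1 a1 by simp
  have base: "N0 \<le> real (card (indep E X (2 * a)))"
    using count[OF sg nk s1, of "2 * a", rule_format, OF XV n4s] unfolding N0_def n_def by simp
  have iter: "\<exists>H. (\<forall>I\<in>H. I \<subseteq> X \<and> card I = 2 * a - j \<and> independent_set E I) \<and> N0 * c ^ j \<le> real (card H)"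
    if "j \<le> a + 1" for j
    using that
  proof (induction j)
    case 0
    show ?case
      by (rule exI[of _ "indep E X (2 * a)"]) (use base in \<open>auto simp: indep_def\<close>)
  next
    case (Suc j)
    then obtain H where H: "\<forall>I\<in>H. I \<subseteq> X \<and> card I = 2 * a - j \<and> independent_set E I"
      and cH: "N0 * c ^ j \<le> real (card H)" by auto
    define t where "t = 2 * a - j"
    have ta: "a \<le> t" "t \<le> 2 * a" "t \<ge> 1" using Suc.prems a1 unfolding t_def by auto
    have finH: "finite H" by (rule finite_subset[of _ "Pow X"]) (use H finX in auto)
    have "N0 * c ^ j > 0" using N0pos cpos by simp
    then have "card H > 0" using cH by linarith
    then have Hne: "H \<noteq> {}" by auto
    have Ht: "\<forall>I\<in>H. I \<subseteq> X \<and> card I = t \<and> independent_set E I" using H t_def by auto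
    have ns: "\<not> superspread H eps del" by (rule nosup[OF ta(1) ta(2) Hne Ht])
    have unif: "\<forall>e\<in>H. finite e \<and> card e = t" using Ht finite_subset[OF _ finX] by auto
    obtain H' where H'1: "\<forall>f\<in>H'. \<exists>e\<in>H. \<exists>v\<in>e. f = e - {v}"
      and H'2: "eps * del * real (card H) \<le> real (card H') * 2 ^ t * real t"
      using step[OF finH unif dpos ns] by blast
    have H'p: "\<forall>I\<in>H'. I \<subseteq> X \<and> card I = 2 * a - Suc j \<and> independent_set E I"
    proof
      fix f assume "f \<in> H'"
      then obtain e v where ev: "e \<in> H" "v \<in> e" "f = e - {v}" using H'1 by blast
      have "e \<subseteq> X" "card e = t" "independent_set E e" "finite e" using Ht unif ev by auto
      then show "f \<subseteq> X \<and> card f = 2 * a - Suc j \<and> independent_set E f"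
        using ev unfolding t_def independent_set_def by auto
    qed
    have tb: "(2::real) ^ t * real t \<le> 2 ^ (2 * a) * (2 * real a)"
    proof (rule mult_mono)
      show "(2::real) ^ t \<le> 2 ^ (2 * a)" by (rule power_increasing) (use ta in auto)
      show "real t \<le> 2 * real a" using ta by simp
    qed auto
    have "c * real (card H) \<le> real (card H')"
    proof -
      have "c * real (card H) = eps * del * real (card H) / (2 ^ (2 * a) * (2 * real a))"
        unfolding c_def by simp
      also have "\<dots> \<le> real (card H') * 2 ^ t * real t / (2 ^ (2 * a) * (2 * real a))"
        by (rule divide_right_mono[OF H'2]) (use a1 in simp)
      also have "\<dots> \<le> real (card H') * (2 ^ (2 * a) * (2 * real a)) / (2 ^ (2 * a) * (2 * real a))"
        by (rule divide_right_mono) (use tb in \<open>auto simp: mult.assoc intro: mult_left_mono\<close>)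
      also have "\<dots> = real (card H')" using a1 by simp
      finally show ?thesis .
    qed
    moreover have "N0 * c ^ Suc j = c * (N0 * c ^ j)" by simp
    moreover have "c * (N0 * c ^ j) \<le> c * real (card H)" using cH cpos by simp
    ultimately have "N0 * c ^ Suc j \<le> real (card H')" by linarith
    with H'p show ?case by blast
  qed
  obtain H where H: "\<forall>I\<in>H. I \<subseteq> X \<and> card I = 2 * a - (a + 1) \<and> independent_set E I"
    and cH: "N0 * c ^ (a + 1) \<le> real (card H)" using iter[of "a + 1"] by auto
  have "H \<subseteq> {T. T \<subseteq> X \<and> card T = a - 1}" using H by auto
  then have "card H \<le> card {T. T \<subseteq> X \<and> card T = a - 1}"
    by (rule card_mono[rotated]) (use finX in simp)
  also have "\<dots> = card X choose (a - 1)" by (rule n_subsets[OF finX])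
  also have "\<dots> \<le> card X ^ (a - 1)"
  proof (cases "a - 1 \<le> card X")
    case True then show ?thesis by (rule binomial_le_pow)
  next
    case False then show ?thesis by (simp add: binomial_eq_0)
  qed
  finally have "real (card H) \<le> n ^ (a - 1)" unfolding n_def by (metis of_nat_le_iff of_nat_power)
  moreover have "n ^ (a - 1) < N0 * c ^ (a + 1)"
    unfolding N0_def c_def eps_eq del_eq using numeric[OF a1 s1, of n] nb unfolding n_def by simp
  ultimately show False using cH by linarith
qed

end
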